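(* If $G$ is a cactus on $n$ vertices, then $\alpha_1(G)\geq \Big\lfloor\frac{n}{2}\Big\rfloor+r(n)$, where $r(n)=0$ if $n\equiv 0\pmod 4$ and $r(n)=1$ otherwise.
   Context: All graphs are finite and simple, with nonempty vertex set. For a graph $G$, a $k$-sparse set is a set of vertices inducing a subgraph of maximum degree at most $k$, and $\alpha_k(G)$ denotes the maximum size of a $k$-sparse set in $G$. A cactus is a graph (not necessarily connected) in which every block is a cycle, a single edge, or a single vertex. *)

theory Defs
  imports Main
begin

definition simple_graph :: "'a set \<Rightarrow> ('a \<Rightarrow> 'a \<Rightarrow> bool) \<Rightarrow> bool" where
  "simple_graph V E \<longleftrightarrow> finite V \<and> V \<noteq> {} \<and>
     (\<forall>u v. E u v \<longrightarrow> u \<in> V \<and> v \<in> V) \<and>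
     (\<forall>u v. E u v \<longrightarrow> E v u) \<and> (\<forall>v. \<not> E v v)"

definition nbrs_in :: "('a \<Rightarrow> 'a \<Rightarrow> bool) \<Rightarrow> 'a set \<Rightarrow> 'a \<Rightarrow> 'a set" where
  "nbrs_in E S v = {u \<in> S. E v u}"

definition joined_in :: "('a \<Rightarrow> 'a \<Rightarrow> bool) \<Rightarrow> 'a set \<Rightarrow> 'a \<Rightarrow> 'a \<Rightarrow> bool" where
  "joined_in E S x y \<longleftrightarrow> (\<lambda>a b. E a b \<and> a \<in> S \<and> b \<in> S)\<^sup>*\<^sup>* x y"

definition connected_in :: "('a \<Rightarrow> 'a \<Rightarrow> bool) \<Rightarrow> 'a set \<Rightarrow> bool" where
  "connected_in E S \<longleftrightarrow> S \<noteq> {} \<and> (\<forall>x\<in>S. \<forall>y\<in>S. joined_in E S x y)"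

definition no_cut_vertex_in :: "('a \<Rightarrow> 'a \<Rightarrow> bool) \<Rightarrow> 'a set \<Rightarrow> bool" where
  "no_cut_vertex_in E S \<longleftrightarrow>
     (\<forall>v\<in>S. \<forall>x\<in>S - {v}. \<forall>y\<in>S - {v}. joined_in E (S - {v}) x y)"

text \<open>A block of G: a maximal connected subgraph without a cut vertex
(such a maximal subgraph is necessarily induced, so it is given by its vertex set).\<close>
definition is_block :: "'a set \<Rightarrow> ('a \<Rightarrow> 'a \<Rightarrow> bool) \<Rightarrow> 'a set \<Rightarrow> bool" where
  "is_block V E B \<longleftrightarrow> B \<subseteq> V \<and> connected_in E B \<and> no_cut_vertex_in E B \<and>
     (\<forall>C. B \<subset> C \<and> C \<subseteq> V \<longrightarrow> \<not> (connected_in E C \<and> no_cut_vertex_in E C))"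

definition is_cycle_in :: "('a \<Rightarrow> 'a \<Rightarrow> bool) \<Rightarrow> 'a set \<Rightarrow> bool" where
  "is_cycle_in E S \<longleftrightarrow> card S \<ge> 3 \<and> connected_in E S \<and>
     (\<forall>v\<in>S. card (nbrs_in E S v) = 2)"

definition cactus :: "'a set \<Rightarrow> ('a \<Rightarrow> 'a \<Rightarrow> bool) \<Rightarrow> bool" where
  "cactus V E \<longleftrightarrow> simple_graph V E \<and>
     (\<forall>B. is_block V E B \<longrightarrow>
        is_cycle_in E B \<or> (\<exists>u v. B = {u, v} \<and> E u v) \<or> (\<exists>v. B = {v}))"

definition k_sparse :: "nat \<Rightarrow> 'a set \<Rightarrow> ('a \<Rightarrow> 'a \<Rightarrow> bool) \<Rightarrow> 'a set \<Rightarrow> bool" where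
  "k_sparse k V E S \<longleftrightarrow> S \<subseteq> V \<and> (\<forall>v\<in>S. card (nbrs_in E S v) \<le> k)"

definition alpha_k :: "nat \<Rightarrow> 'a set \<Rightarrow> ('a \<Rightarrow> 'a \<Rightarrow> bool) \<Rightarrow> nat" where
  "alpha_k k V E = Max (card ` {S. k_sparse k V E S})"

end

theory Submission
  imports Defs
begin


lemma joined_step: "joined_in E S x y \<Longrightarrow> E y z \<Longrightarrow> y \<in> S \<Longrightarrow> z \<in> S \<Longrightarrow> joined_in E S x z"
  unfolding joined_in_def by (rule rtranclp.rtrancl_into_rtrancl) auto

lemma joined_mem: "joined_in E S x y \<Longrightarrow> x \<in> S \<Longrightarrow> y \<in> S"
  unfolding joined_in_def by (induction rule: rtranclp_induct) auto

lemma joined_trans: "joined_in E S x y \<Longrightarrow> joined_in E S y z \<Longrightarrow> joined_in E S x z"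
  unfolding joined_in_def by (rule rtranclp_trans)

lemma joined_sym:
  assumes sym: "\<forall>u v. E u v \<longrightarrow> E v u"
  shows "joined_in E S x y \<Longrightarrow> joined_in E S y x"
  unfolding joined_in_def
proof (induction rule: rtranclp_induct)
  case base
  then show ?case by simp
next
  case (step y z)
  then show ?case using sym
    by (metis (mono_tags, lifting) converse_rtranclp_into_rtranclp)
qed

lemma joined_closed:
  "joined_in E S x y \<Longrightarrow> x \<in> K \<Longrightarrow> (\<forall>k\<in>K. \<forall>u\<in>S. E k u \<longrightarrow> u \<in> K) \<Longrightarrow> y \<in> K"
  unfolding joined_in_def by (induction rule: rtranclp_induct) auto

definition PP :: "('a \<Rightarrow> 'a \<Rightarrow> bool) \<Rightarrow> 'a set \<Rightarrow> bool" where
  "PP E W \<longleftrightarrow> (\<forall>C. C \<subseteq> W \<and> 3 \<le> card C \<and> connected_in E C \<and> no_cut_vertex_in E C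
      \<longrightarrow> (\<forall>v\<in>C. card (nbrs_in E C v) \<le> 2))"

lemma PP_mono: "PP E W \<Longrightarrow> W' \<subseteq> W \<Longrightarrow> PP E W'"
  unfolding PP_def by blast

definition ff :: "nat \<Rightarrow> nat" where
  "ff n = n div 2 + (if n mod 4 = 0 then 0 else 1)"

lemma ff_add: "ff (a + b) \<le> ff a + ff b"
  unfolding ff_def by presburger

lemma ff_small: "n \<le> 4 \<Longrightarrow> ff n \<le> 2"
  unfolding ff_def by presburger

lemma ff_sub: "k \<le> n \<Longrightarrow> ff n \<le> ff (n - k) + ff k"
  using ff_add[of "n-k" k] by simp

lemma cactus_PP:
  assumes "cactus V E"
  shows "PP E V"
  unfolding PP_def
proof (intro allI impI)
  fix C assume H: "C \<subseteq> V \<and> 3 \<le> card C \<and> connected_in E C \<and> no_cut_vertex_in E C"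
  have fin: "finite V" using assms unfolding cactus_def simple_graph_def by blast
  define F where "F = {B. C \<subseteq> B \<and> B \<subseteq> V \<and> connected_in E B \<and> no_cut_vertex_in E B}"
  have CF: "C \<in> F" using H unfolding F_def by blast
  have bnd: "\<forall>B. B \<in> F \<longrightarrow> card B < card V + 1"
    using fin by (auto simp: F_def intro: card_mono le_imp_less_Suc)
  obtain B where B: "B \<in> F" and Bmax: "\<forall>B'. B' \<in> F \<longrightarrow> card B' \<le> card B"
    using Lattices_Big.ex_has_greatest_nat[of "\<lambda>B. B \<in> F" C card "card V + 1", OF CF bnd] by blast
  have blk: "is_block V E B"
    unfolding is_block_def
  proof (intro conjI allI impI)
    show "B \<subseteq> V" using B F_def by blast
    show "connected_in E B" using B F_def by blast
    show "no_cut_vertex_in E B" using B F_def by blast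
    fix C' assume C': "B \<subset> C' \<and> C' \<subseteq> V"
    show "\<not> (connected_in E C' \<and> no_cut_vertex_in E C')"
    proof
      assume "connected_in E C' \<and> no_cut_vertex_in E C'"
      then have "C' \<in> F" using C' B unfolding F_def by blast
      then have "card C' \<le> card B" using Bmax by blast
      moreover have "card B < card C'" using C' fin by (meson psubset_card_mono rev_finite_subset)
      ultimately show False by simp
    qed
  qed
  have CB: "C \<subseteq> B" "B \<subseteq> V" using B F_def by auto
  have finB: "finite B" using CB fin finite_subset by blast
  have "card C \<le> card B" using CB finB card_mono by blast
  then have cB: "3 \<le> card B" using H by simp
  have "is_cycle_in E B \<or> (\<exists>u v. B = {u, v} \<and> E u v) \<or> (\<exists>v. B = {v})"
    using assms blk unfolding cactus_def by blast
  moreover have "\<not> (\<exists>u v. B = {u, v} \<and> E u v)"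
  proof
    assume "\<exists>u v. B = {u, v} \<and> E u v"
    then obtain u v where "B = {u,v}" by blast
    then have "card B \<le> 2" by (simp add: card_insert_le_m1)
    then show False using cB by simp
  qed
  moreover have "\<not> (\<exists>v. B = {v})" using cB by auto
  ultimately have cyc: "is_cycle_in E B" by blast
  show "\<forall>v\<in>C. card (nbrs_in E C v) \<le> 2"
  proof
    fix v assume v: "v \<in> C"
    have "nbrs_in E C v \<subseteq> nbrs_in E B v" using CB unfolding nbrs_in_def by blast
    moreover have "finite (nbrs_in E B v)" using finB unfolding nbrs_in_def by simp
    ultimately have "card (nbrs_in E C v) \<le> card (nbrs_in E B v)" by (rule card_mono[rotated])
    also have "\<dots> = 2" using cyc v CB unfolding is_cycle_in_def by blast
    finally show "card (nbrs_in E C v) \<le> 2" .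
  qed
qed



lemma cactus_struct:
  assumes sym: "\<forall>u v. E u v \<longrightarrow> E v u" and irr: "\<forall>v. \<not> E v v"
    and fin: "finite W" and ne: "W \<noteq> {}" and P: "PP E W"
  shows "(\<exists>v\<in>W. nbrs_in E W v = {}) \<or>
    (\<exists>u l1 l2. l1 \<in> W \<and> l2 \<in> W \<and> l1 \<noteq> l2 \<and> nbrs_in E W l1 = {u} \<and> nbrs_in E W l2 = {u}) \<or>
    (\<exists>a\<in>W. \<exists>b\<in>W. E a b \<and> card (nbrs_in E W a \<union> nbrs_in E W b) \<le> 4)"
proof (rule ccontr)
  define N where "N = nbrs_in E W"
  assume "\<not> ?thesis"
  then have no1: "\<And>v. v \<in> W \<Longrightarrow> N v \<noteq> {}"
    and no2: "\<And>u l1 l2. l1 \<in> W \<Longrightarrow> l2 \<in> W \<Longrightarrow> l1 \<noteq> l2 \<Longrightarrow> N l1 = {u} \<Longrightarrow> N l2 = {u} \<Longrightarrow> False"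
    and no3: "\<And>a b. a \<in> W \<Longrightarrow> b \<in> W \<Longrightarrow> E a b \<Longrightarrow> card (N a \<union> N b) \<le> 4 \<Longrightarrow> False"
    unfolding N_def by blast+
  have Nmem: "\<And>u v. u \<in> N v \<longleftrightarrow> u \<in> W \<and> E v u" unfolding N_def nbrs_in_def by blast
  have finN: "\<And>v. finite (N v)" using fin unfolding N_def nbrs_in_def by simp
  have NW: "\<And>v. N v \<subseteq> W" using Nmem by blast
  have nself: "\<And>v. v \<notin> N v" using Nmem irr by blast
  obtain a where aW: "a \<in> W" using ne by blast
  obtain b where bN: "b \<in> N a" using no1[OF aW] by blast
  have bW: "b \<in> W" and Eab: "E a b" using bN Nmem by auto
  have ab: "a \<noteq> b" using Eab irr by auto
  have W3: "3 \<le> card W"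
  proof (rule ccontr)
    assume "\<not> 3 \<le> card W"
    moreover have "card {a,b} = 2" using ab by simp
    moreover have "{a,b} \<subseteq> W" using aW bW by simp
    ultimately have "W = {a,b}" using fin
      by (metis card_seteq le_antisym not_less_eq_eq numeral_2_eq_2 numeral_3_eq_3 card_mono)
    then have "N a \<union> N b \<subseteq> {a,b}" using NW by blast
    then have "card (N a \<union> N b) \<le> card {a,b}" by (intro card_mono) simp_all
    then show False using no3[OF aW bW Eab] \<open>card {a,b} = 2\<close> by simp
  qed
  define br where "br c D \<longleftrightarrow> c \<in> W \<and> D \<subseteq> W - {c} \<and> 2 \<le> card D \<and> (\<forall>d\<in>D. N d \<subseteq> insert c D)" for c D
  have br0: "br a (W - {a})"
    unfolding br_def using aW W3 NW fin by auto
  obtain p where brp: "br (fst p) (snd p)" and minp: "\<And>p'. br (fst p') (snd p') \<Longrightarrow> card (snd p) \<le> card (snd p')"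
    using ex_has_least_nat[of "\<lambda>p. br (fst p) (snd p)" "(a, W - {a})" "\<lambda>p. card (snd p)"] br0 by auto
  define c where "c = fst p"
  define D where "D = snd p"
  have brD: "br c D" using brp c_def D_def by simp
  have minD: "\<And>c' D'. br c' D' \<Longrightarrow> card D \<le> card D'"
    using minp[of "(c', D')" for c' D'] D_def by force
  have cW: "c \<in> W" and DW: "D \<subseteq> W - {c}" and D2: "2 \<le> card D" and Dcl: "\<And>d. d \<in> D \<Longrightarrow> N d \<subseteq> insert c D"
    using brD unfolding br_def by auto
  have finD: "finite D" using DW fin finite_subset by blast
  have cD: "c \<notin> D" using DW by blast
  have DsubW: "D \<subseteq> W" using DW by blast
  have claimA: "\<exists>x\<in>D1. \<exists>y\<in>D - D1. E x y" if D1: "D1 \<subseteq> D" "D1 \<noteq> {}" "D1 \<noteq> D" for D1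
  proof (rule ccontr)
    assume nx: "\<not> (\<exists>x\<in>D1. \<exists>y\<in>D - D1. E x y)"
    define D2 where "D2 = D - D1"
    have cl1: "N d \<subseteq> insert c D1" if "d \<in> D1" for d
      using Dcl[of d] that D1 nx Nmem by blast
    have cl2: "N d \<subseteq> insert c D2" if "d \<in> D2" for d
      using Dcl[of d] that D1 nx Nmem sym unfolding D2_def by blast
    have c1: "card D1 \<le> 1"
    proof (rule ccontr)
      assume "\<not> card D1 \<le> 1"
      then have "br c D1" unfolding br_def using cW DW D1 cl1 by auto
      moreover have "card D1 < card D" using D1 finD by (meson psubset_card_mono psubsetI)
      ultimately show False using minD by fastforce
    qed
    have D2ne: "D2 \<noteq> {}" using D1 unfolding D2_def by blast
    have c2: "card D2 \<le> 1"
    proof (rule ccontr)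
      assume "\<not> card D2 \<le> 1"
      then have "br c D2" unfolding br_def D2_def using cW DW D1 cl2 by (auto simp: D2_def)
      moreover have "card D2 < card D" using D1 finD unfolding D2_def by (intro psubset_card_mono) auto
      ultimately show False using minD by fastforce
    qed
    obtain l1 where l1: "D1 = {l1}" using c1 D1(2) finD D1(1)
      by (metis One_nat_def card_0_eq card_1_singletonE finite_subset le_SucE le_zero_eq)
    obtain l2 where l2: "D2 = {l2}" using c2 D2ne finD unfolding D2_def
      by (metis One_nat_def card_0_eq card_1_singletonE finite_Diff le_SucE le_zero_eq)
    have "N l1 \<subseteq> {c}" using cl1[of l1] l1 nself by blast
    then have n1: "N l1 = {c}" using no1[of l1] l1 D1 DsubW by blast
    have "N l2 \<subseteq> {c}" using cl2[of l2] l2 nself by blast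
    then have n2: "N l2 = {c}" using no1[of l2] l2 D1 DsubW unfolding D2_def by blast
    have "l1 \<noteq> l2" using l1 l2 unfolding D2_def by blast
    then show False using no2[OF _ _ _ n1 n2] l1 l2 D1 DsubW unfolding D2_def by blast
  qed
  have claimB: "card K \<le> 1" if K: "d \<in> D" "K \<subseteq> D - {d}" "\<forall>k\<in>K. N k \<subseteq> insert d K" for d K
  proof (rule ccontr)
    assume "\<not> card K \<le> 1"
    then have "br d K" unfolding br_def using K DW by auto
    moreover have "card K < card D" using K finD by (intro psubset_card_mono) auto
    ultimately show False using minD by fastforce
  qed
  define L where "L = {v\<in>D. card (N v) = 1}"
  define Q where "Q = insert c (D - L)"
  have leafnbr: "N l = {q}" if "l \<in> L" "E q l" "q \<in> W" for l q
  proof -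
    have "card (N l) = 1" using that L_def by blast
    then obtain u where u: "N l = {u}" by (rule card_1_singletonE)
    have "q \<in> N l" using that sym Nmem by blast
    then show ?thesis using u by auto
  qed
  have leaf_att: "\<exists>u\<in>D - L. N l = {u}" if lL: "l \<in> L" for l
  proof -
    have lD: "l \<in> D" and "card (N l) = 1" using lL L_def by auto
    then obtain u where u: "N l = {u}" by (metis card_1_singletonE)
    have "u \<in> insert c D" using Dcl[OF lD] u by blast
    moreover have "u \<noteq> c"
    proof
      assume uc: "u = c"
      have "{l} \<noteq> D" using D2 by auto
      then obtain y where "y \<in> D - {l}" "E l y" using claimA[of "{l}"] lD by blast
      then have "y \<in> N l" using Nmem DsubW by blast
      then show False using u uc cD \<open>y \<in> D - {l}\<close> by auto
    qed
    ultimately have uD: "u \<in> D" by blast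
    have "u \<notin> L"
    proof
      assume uL: "u \<in> L"
      have Elu: "E l u" using u Nmem by blast
      have Nu: "N u = {l}" using leafnbr[OF uL] sym Elu lD DsubW by blast
      have lu: "l \<noteq> u" using Elu irr by blast
      show False
      proof (cases "D = {l,u}")
        case True
        have "card (N l \<union> N u) \<le> 2" using u Nu by (simp add: card_insert_le_m1)
        then show ?thesis using no3[of l u] Elu lD uD DsubW by auto
      next
        case False
        then obtain x y where "x \<in> {l,u}" "y \<in> D - {l,u}" "E x y"
          using claimA[of "{l,u}"] lD uD by blast
        then have "y \<in> N x" using Nmem DsubW by blast
        then show False using u Nu \<open>x \<in> {l,u}\<close> \<open>y \<in> D - {l,u}\<close> by blast
      qed
    qed
    then show ?thesis using uD u by blast
  qed
  have oneleaf: "l1 = l2" if "l1 \<in> L" "l2 \<in> L" "E q l1" "E q l2" "q \<in> W" for q l1 l2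
    using leafnbr[OF that(1,3,5)] leafnbr[OF that(2,4,5)] no2[of l1 l2 q] that L_def DsubW by blast
  have LD: "L \<subseteq> D" unfolding L_def by blast
  have DL2: "2 \<le> card (D - L)"
  proof (rule ccontr)
    assume "\<not> 2 \<le> card (D - L)"
    then have cle: "card (D - L) \<le> 1" by simp
    obtain d where dD: "d \<in> D" using D2 by fastforce
    have "D - L \<noteq> {}"
    proof (cases "d \<in> L")
      case True then show ?thesis using leaf_att by blast
    next
      case False then show ?thesis using dD by blast
    qed
    then obtain q where q: "D - L = {q}" using cle finD
      by (metis One_nat_def card_0_eq card_1_singletonE finite_Diff le_SucE le_zero_eq)
    have qW: "q \<in> W" using q DsubW by blast
    have Lq: "N l = {q}" if "l \<in> L" for l using leaf_att[OF that] q by auto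
    have LN: "L \<subseteq> N q"
    proof
      fix l assume lL: "l \<in> L"
      then have "E l q" using Lq Nmem by auto
      then have "E q l" using sym by blast
      moreover have "l \<in> W" using lL LD DsubW by blast
      ultimately show "l \<in> N q" using Nmem by blast
    qed
    have L1: "\<forall>l1\<in>L. \<forall>l2\<in>L. l1 = l2"
    proof (intro ballI)
      fix l1 l2 assume "l1 \<in> L" "l2 \<in> L"
      moreover have "E q l1" "E q l2" using LN \<open>l1 \<in> L\<close> \<open>l2 \<in> L\<close> Nmem by blast+
      ultimately show "l1 = l2" using oneleaf qW by blast
    qed
    have Dq: "D = insert q L" using q LD by blast
    then have "L \<noteq> {}" using D2 by (metis card.empty card_insert_disjoint empty_iff finite.emptyI not_less_eq_eq numeral_2_eq_2 le_zero_eq card.insert)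
    then obtain l where lL: "l \<in> L" by blast
    then have Ll: "L = {l}" using L1 by blast
    have "N q \<subseteq> {c, l}" using Dcl[of q] Dq Ll nself by blast
    moreover have "N l = {q}" using Lq lL by blast
    ultimately have "N l \<union> N q \<subseteq> {q, c, l}" by blast
    then have "card (N l \<union> N q) \<le> card {q,c,l}" by (intro card_mono) simp_all
    also have "\<dots> \<le> 3" by (simp add: card_insert_if)
    finally have "card (N l \<union> N q) \<le> 4" by simp
    moreover have "E l q" using \<open>N l = {q}\<close> Nmem by blast
    ultimately show False using no3[of l q] lL LD DsubW qW by blast
  qed
  have cardQ: "3 \<le> card Q" unfolding Q_def using DL2 cD finD by simp
  have QW: "Q \<subseteq> W" unfolding Q_def using cW DsubW by blast
  have finQ: "finite Q" using QW fin finite_subset by blast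
  have conn: "joined_in E (Q - R) x y"
    if R: "R \<subseteq> Q" "R = {} \<or> (\<exists>v. R = {v})" and xy: "x \<in> Q - R" "y \<in> Q - R" for R x y
  proof (rule ccontr)
    define S where "S = Q - R"
    assume nj: "\<not> joined_in E (Q - R) x y"
    have "\<exists>z w. z \<in> S \<and> w \<in> S \<and> \<not> joined_in E S z w \<and> \<not> joined_in E S z c"
    proof (cases "joined_in E S x c")
      case True
      have "\<not> joined_in E S y c"
        using True nj joined_sym[OF sym] joined_trans unfolding S_def by metis
      moreover have "\<not> joined_in E S y x" using nj joined_sym[OF sym] unfolding S_def by metis
      ultimately show ?thesis using xy S_def by blast
    next
      case False
      then show ?thesis using xy nj S_def by blast
    qed
    then obtain z w where zS: "z \<in> S" and wS: "w \<in> S" and zw: "\<not> joined_in E S z w"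
      and zc: "\<not> joined_in E S z c" by blast
    define K where "K = {t. joined_in E S z t}"
    have KS: "K \<subseteq> S"
    proof
      fix t assume "t \<in> K"
      then have "joined_in E S z t" unfolding K_def by simp
      then show "t \<in> S" using joined_mem zS by metis
    qed
    have zK: "z \<in> K" unfolding K_def joined_in_def by simp
    have cK: "c \<notin> K" using zc K_def by blast
    have wK: "w \<notin> K" using zw K_def by blast
    have Kcl: "u \<in> K" if "k \<in> K" "u \<in> S" "E k u" for k u
    proof -
      have "joined_in E S z k" using that(1) unfolding K_def by simp
      moreover have "k \<in> S" using that(1) KS by blast
      ultimately have "joined_in E S z u" using joined_step that(2,3) by metis
      then show ?thesis unfolding K_def by simp
    qed
    have KDL: "K \<subseteq> D - L" using KS cK unfolding S_def Q_def by blast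
    define K' where "K' = K \<union> {l\<in>L. \<exists>k\<in>K. E k l}"
    have K'D: "K' \<subseteq> D" using KDL LD unfolding K'_def by blast
    have K'R: "K' \<inter> R = {}" using KS R(1) cD LD unfolding K'_def S_def Q_def by blast
    have zK': "z \<in> K'" using zK K'_def by blast
    have K'cl: "N k \<subseteq> K' \<union> R" if kK': "k \<in> K'" for k
    proof
      fix u assume uN: "u \<in> N k"
      show "u \<in> K' \<union> R"
      proof (cases "k \<in> K")
        case True
        have kD: "k \<in> D" using True KDL by blast
        have Eku: "E k u" using uN Nmem by blast
        have "u \<in> insert c D" using Dcl[OF kD] uN by blast
        then consider "u \<in> L" | "u \<in> R" | "u \<in> S" unfolding S_def Q_def by blast
        then show ?thesis
        proof cases
          case 1 then show ?thesis using True Eku K'_def by blast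
        next
          case 2 then show ?thesis by blast
        next
          case 3 then show ?thesis using Kcl[OF True 3 Eku] K'_def by blast
        qed
      next
        case False
        then obtain k0 where "k \<in> L" "k0 \<in> K" "E k0 k" using kK' K'_def by blast
        then have "N k = {k0}" using leafnbr KS QW S_def by blast
        then show ?thesis using uN \<open>k0 \<in> K\<close> K'_def by auto
      qed
    qed
    have finK': "finite K'" using K'D finD finite_subset by blast
    show False
    proof (cases "R = {} \<or> R = {c}")
      case False
      then obtain v where Rv: "R = {v}" "v \<noteq> c" using R by blast
      then have vD: "v \<in> D - L" using R(1) Q_def by blast
      have "K' \<subseteq> D - {v}" using K'D K'R Rv by blast
      moreover have "\<forall>k\<in>K'. N k \<subseteq> insert v K'" using K'cl Rv by blast
      ultimately have "card K' \<le> 1" using claimB[of v K'] vD by blast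
      then have "\<forall>a\<in>K'. \<forall>b\<in>K'. a = b" using card_le_Suc0_iff_eq[OF finK'] by simp
      then have "K' = {z}" using zK' by blast
      then have "N z \<subseteq> {z, v}" using K'cl[OF zK'] Rv by auto
      then have "N z \<subseteq> {v}" using nself[of z] by blast
      moreover have "N z \<noteq> {}" using no1 zS QW S_def by blast
      ultimately have "N z = {v}" by blast
      then have "z \<in> L" using zK KDL L_def by auto
      then show False using zK KDL by blast
    next
      case True
      have cl: "N k \<subseteq> insert c K'" if "k \<in> K'" for k using K'cl[OF that] True by blast
      show False
      proof (cases "K' = D")
        case False
        then obtain x' y' where "x' \<in> K'" "y' \<in> D - K'" "E x' y'"
          using claimA[of K'] K'D zK' by blast
        then have "y' \<in> N x'" using Nmem DsubW by blast
        then show False using cl[OF \<open>x' \<in> K'\<close>] \<open>y' \<in> D - K'\<close> cD by blast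
      next
        case True
        have "w = c"
        proof (rule ccontr)
          assume "w \<noteq> c"
          then have "w \<in> D - L" using wS S_def Q_def by blast
          then have "w \<in> K" using True K'_def by blast
          then show False using wK by blast
        qed
        have ND: "N k \<subseteq> D" if kD: "k \<in> D" for k
        proof
          fix u assume uN: "u \<in> N k"
          show "u \<in> D"
          proof (cases "k \<in> K")
            case True
            have "u \<noteq> c" using Kcl[OF True] wS \<open>w = c\<close> cK uN Nmem by blast
            then show ?thesis using Dcl[OF kD] uN by blast
          next
            case False
            then have "k \<in> K'" using kD \<open>K' = D\<close> by blast
            then obtain k0 where "k \<in> L" "k0 \<in> K" "E k0 k" using False unfolding K'_def by blast
            moreover have "k0 \<in> W" using \<open>k0 \<in> K\<close> KS QW S_def by blast
            ultimately have "N k = {k0}" using leafnbr by blast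
            then have "N k \<subseteq> K'" using \<open>k0 \<in> K\<close> unfolding K'_def by auto
            then show ?thesis using uN \<open>K' = D\<close> by blast
          qed
        qed
        have zD: "z \<in> D" using zK' K'D by blast
        have "card (D - {z}) \<le> 1"
          using claimB[of z "D - {z}"] zD ND by blast
        then have "card D \<le> 2" using zD finD by (simp add: card_Diff_singleton)
        then have "card D = 2" using D2 by simp
        then obtain t where Dt: "D = {z, t}" "t \<noteq> z" using zD
          by (metis card_2_iff insert_commute insertE singletonD)
        have Nz: "N z \<subseteq> {t}" using ND[OF zD] Dt nself by blast
        have tD: "t \<in> D" using Dt by blast
        have Nt: "N t \<subseteq> {z}" using ND[OF tD] Dt nself by blast
        have "N z = {t}" using Nz no1 zD DsubW by blast
        then have "E z t" using Nmem by blast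
        have "card (N z \<union> N t) \<le> card {z, t}" using Nz Nt by (intro card_mono) auto
        then show False using no3[of z t] \<open>E z t\<close> zD tD DsubW Dt by auto
      qed
    qed
  qed
  have connQ: "connected_in E Q"
    unfolding connected_in_def using conn[of "{}"] Q_def by auto
  have nocutQ: "no_cut_vertex_in E Q"
    unfolding no_cut_vertex_in_def
  proof (intro ballI)
    fix v x y assume "v \<in> Q" "x \<in> Q - {v}" "y \<in> Q - {v}"
    then show "joined_in E (Q - {v}) x y" using conn[of "{v}" x y] by blast
  qed
  have degQ: "\<forall>q\<in>Q. card (nbrs_in E Q q) \<le> 2"
    using P[unfolded PP_def, rule_format, of Q] QW cardQ connQ nocutQ by blast
  have nbrsQ: "nbrs_in E Q d = N d - L" if "d \<in> D" for d
  proof (rule set_eqI)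
    fix u
    show "u \<in> nbrs_in E Q d \<longleftrightarrow> u \<in> N d - L"
    proof
      assume "u \<in> nbrs_in E Q d"
      then have "u \<in> Q" "E d u" unfolding nbrs_in_def by auto
      moreover have "c \<notin> L" using cD LD by blast
      ultimately show "u \<in> N d - L" using QW Nmem unfolding Q_def by blast
    next
      assume u: "u \<in> N d - L"
      then have "u \<in> insert c D" using Dcl[OF that] by blast
      then have "u \<in> Q" using u unfolding Q_def by blast
      moreover have "E d u" using u Nmem by blast
      ultimately show "u \<in> nbrs_in E Q d" unfolding nbrs_in_def by blast
    qed
  qed
  have Lempty: "L = {}"
  proof (rule ccontr)
    assume "L \<noteq> {}"
    then obtain l where lL: "l \<in> L" by blast
    then obtain u where uDL: "u \<in> D - L" and Nl: "N l = {u}" using leaf_att by blast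
    have Elu: "E l u" using Nl Nmem by blast
    have uW: "u \<in> W" and lW: "l \<in> W" using uDL lL LD DsubW by auto
    have "N u \<subseteq> (N u - L) \<union> {l}"
    proof
      fix t assume t: "t \<in> N u"
      show "t \<in> (N u - L) \<union> {l}"
      proof (cases "t \<in> L")
        case True
        have "E u t" using t Nmem by blast
        moreover have "E u l" using Elu sym by blast
        ultimately have "t = l" using oneleaf[of t l u] True lL uW by blast
        then show ?thesis by blast
      next
        case False then show ?thesis using t by blast
      qed
    qed
    then have "card (N u) \<le> card ((N u - L) \<union> {l})"
      by (intro card_mono) (simp_all add: finN)
    also have "\<dots> \<le> card (N u - L) + card {l}" by (rule card_Un_le)
    finally have "card (N u) \<le> card (N u - L) + card {l}" .
    moreover have "card (N u - L) \<le> 2"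
    proof -
      have "u \<in> Q" using uDL unfolding Q_def by blast
      then have "card (nbrs_in E Q u) \<le> 2" using degQ by blast
      moreover have "u \<in> D" using uDL by blast
      ultimately show ?thesis using nbrsQ by metis
    qed
    ultimately have "card (N u) \<le> 3" by simp
    moreover have "N l \<union> N u = insert u (N u)" using Nl by simp
    ultimately have "card (N l \<union> N u) \<le> 4" using finN[of u]
      by (simp add: card_insert_if)
    then show False using no3[of l u] Elu lW uW by blast
  qed
  obtain a' where a'D: "a' \<in> D" using D2 by fastforce
  have "{a'} \<noteq> D" using D2 by auto
  then obtain b' where b': "b' \<in> D - {a'}" "E a' b'" using claimA[of "{a'}"] a'D by blast
  have deg: "card (N d) \<le> 2" if "d \<in> D" for d
  proof -
    have "d \<in> Q" using that Lempty unfolding Q_def by simp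
    then have "card (nbrs_in E Q d) \<le> 2" using degQ by blast
    moreover have "nbrs_in E Q d = N d" using nbrsQ[OF that] Lempty by simp
    ultimately show ?thesis by simp
  qed
  have "card (N a' \<union> N b') \<le> card (N a') + card (N b')" by (rule card_Un_le)
  also have "\<dots> \<le> 4" using deg[OF a'D] deg[of b'] b' by simp
  finally show False using no3[of a' b'] b' a'D DsubW by blast
qed



lemma piece:
  assumes sym: "\<forall>u v. E u v \<longrightarrow> E v u" and irr: "\<forall>v. \<not> E v v"
    and fin: "finite W" and ne: "W \<noteq> {}" and P: "PP E W"
  shows "\<exists>X Y. X \<subseteq> W \<and> X \<noteq> {} \<and> Y \<subseteq> X \<and> (\<forall>y\<in>Y. nbrs_in E W y \<subseteq> X) \<and>
     (\<forall>y\<in>Y. card (nbrs_in E Y y) \<le> 1) \<and> ff (card X) \<le> card Y"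
proof -
  consider (i) "\<exists>v\<in>W. nbrs_in E W v = {}"
    | (ii) "\<exists>u l1 l2. l1 \<in> W \<and> l2 \<in> W \<and> l1 \<noteq> l2 \<and> nbrs_in E W l1 = {u} \<and> nbrs_in E W l2 = {u}"
    | (iii) "\<exists>a\<in>W. \<exists>b\<in>W. E a b \<and> card (nbrs_in E W a \<union> nbrs_in E W b) \<le> 4"
    using cactus_struct[OF assms] by blast
  then show ?thesis
  proof cases
    case i
    then obtain v where v: "v \<in> W" "nbrs_in E W v = {}" by blast
    have "nbrs_in E {v} v = {}" using irr unfolding nbrs_in_def by auto
    then show ?thesis using v
      by (intro exI[of _ "{v}"]) (auto simp: ff_def)
  next
    case ii
    then obtain u l1 l2 where h: "l1 \<in> W" "l2 \<in> W" "l1 \<noteq> l2" "nbrs_in E W l1 = {u}" "nbrs_in E W l2 = {u}"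
      by blast
    have u: "u \<in> W" "E l1 u" "E l2 u" using h(4,5) unfolding nbrs_in_def by blast+
    have "u \<noteq> l1" "u \<noteq> l2" using u irr by auto
    have n1: "nbrs_in E {l1,l2} l1 = {}"
      using h \<open>u \<noteq> l2\<close> irr unfolding nbrs_in_def by blast
    have n2: "nbrs_in E {l1,l2} l2 = {}"
      using h \<open>u \<noteq> l1\<close> irr unfolding nbrs_in_def by blast
    have c: "card {u,l1,l2} \<le> 4" by (simp add: card_insert_if)
    have "card {l1,l2} = 2" using h(3) by simp
    then show ?thesis using h u n1 n2 ff_small[OF c]
      by (intro exI[of _ "{u,l1,l2}"] exI[of _ "{l1,l2}"]) auto
  next
    case iii
    then obtain a b where h: "a \<in> W" "b \<in> W" "E a b" "card (nbrs_in E W a \<union> nbrs_in E W b) \<le> 4"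
      by blast
    have ab: "a \<noteq> b" using h irr by auto
    have "nbrs_in E {a,b} a \<subseteq> {b}" "nbrs_in E {a,b} b \<subseteq> {a}"
      using irr unfolding nbrs_in_def by auto
    then have "card (nbrs_in E {a,b} a) \<le> card {b}" "card (nbrs_in E {a,b} b) \<le> card {a}"
      by (metis card_mono finite.emptyI finite.insertI)+
    then have "card (nbrs_in E {a,b} a) \<le> 1" "card (nbrs_in E {a,b} b) \<le> 1" by simp_all
    moreover have "a \<in> nbrs_in E W b" "b \<in> nbrs_in E W a" using h sym unfolding nbrs_in_def by auto
    moreover have "nbrs_in E W a \<union> nbrs_in E W b \<subseteq> W" unfolding nbrs_in_def by auto
    moreover have "card {a,b} = 2" using ab by simp
    ultimately show ?thesis using h ff_small[OF h(4)]
      by (intro exI[of _ "nbrs_in E W a \<union> nbrs_in E W b"] exI[of _ "{a,b}"]) auto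
  qed
qed

lemma main:
  assumes sym: "\<forall>u v. E u v \<longrightarrow> E v u" and irr: "\<forall>v. \<not> E v v"
  shows "finite W \<Longrightarrow> PP E W \<Longrightarrow> \<exists>S. S \<subseteq> W \<and> (\<forall>v\<in>S. card (nbrs_in E S v) \<le> 1) \<and> ff (card W) \<le> card S"
proof (induction "card W" arbitrary: W rule: less_induct)
  case less
  show ?case
  proof (cases "W = {}")
    case True
    then show ?thesis by (auto simp: ff_def)
  next
    case False
    obtain X Y where XY: "X \<subseteq> W" "X \<noteq> {}" "Y \<subseteq> X" "\<forall>y\<in>Y. nbrs_in E W y \<subseteq> X"
      "\<forall>y\<in>Y. card (nbrs_in E Y y) \<le> 1" "ff (card X) \<le> card Y"
      using piece[OF sym irr less.prems(1) False less.prems(2)] by blast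
    have finX: "finite X" using XY(1) less.prems(1) finite_subset by blast
    have "card (W - X) < card W"
      using XY(1,2) less.prems(1) by (intro psubset_card_mono) auto
    moreover have "PP E (W - X)" using PP_mono less.prems(2) by blast
    moreover have "finite (W - X)" using less.prems(1) by simp
    ultimately obtain S where S: "S \<subseteq> W - X" "\<forall>v\<in>S. card (nbrs_in E S v) \<le> 1" "ff (card (W - X)) \<le> card S"
      using less.hyps by blast
    have finS: "finite S" using S(1) less.prems(1) finite_subset by blast
    have noedge: "\<not> E s y" if "s \<in> S" "y \<in> Y" for s y
    proof
      assume "E s y"
      then have "s \<in> nbrs_in E W y" using sym S(1) that unfolding nbrs_in_def by auto
      then show False using XY(4) that S(1) by blast
    qed
    have sp: "\<forall>v\<in>S \<union> Y. card (nbrs_in E (S \<union> Y) v) \<le> 1"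
    proof
      fix v assume v: "v \<in> S \<union> Y"
      show "card (nbrs_in E (S \<union> Y) v) \<le> 1"
      proof (cases "v \<in> S")
        case True
        have "nbrs_in E (S \<union> Y) v = nbrs_in E S v"
          using noedge True unfolding nbrs_in_def by auto
        then show ?thesis using S(2) True by simp
      next
        case False
        then have vY: "v \<in> Y" using v by blast
        have "nbrs_in E (S \<union> Y) v = nbrs_in E Y v"
          using noedge vY sym unfolding nbrs_in_def by auto
        then show ?thesis using XY(5) vY by simp
      qed
    qed
    have disj: "S \<inter> Y = {}" using S(1) XY(3) by blast
    have finY: "finite Y" using XY(3) finX finite_subset by blast
    have cardU: "card (S \<union> Y) = card S + card Y" using disj finS finY card_Un_disjoint by blast
    have cWX: "card (W - X) = card W - card X" using XY(1) finX by (simp add: card_Diff_subset)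
    have "card X \<le> card W" using XY(1) less.prems(1) card_mono by blast
    then have "ff (card W) \<le> ff (card W - card X) + ff (card X)" by (rule ff_sub)
    also have "\<dots> \<le> card (S \<union> Y)" using S(3) XY(6) cardU cWX by simp
    finally show ?thesis using sp S(1) XY(1,3) by (intro exI[of _ "S \<union> Y"]) auto
  qed
qed

theorem lemma4p2:
  fixes V :: "'a set" and E :: "'a \<Rightarrow> 'a \<Rightarrow> bool" and n :: nat
  assumes "cactus V E" and "card V = n"
  shows "alpha_k 1 V E \<ge> n div 2 + (if n mod 4 = 0 then 0 else 1)"
proof -
  have sg: "simple_graph V E" using assms(1) unfolding cactus_def by blast
  then have fin: "finite V" and sym: "\<forall>u v. E u v \<longrightarrow> E v u" and irr: "\<forall>v. \<not> E v v"
    unfolding simple_graph_def by blast+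
  obtain S where S: "S \<subseteq> V" "\<forall>v\<in>S. card (nbrs_in E S v) \<le> 1" "ff (card V) \<le> card S"
    using main[OF sym irr fin cactus_PP[OF assms(1)]] by blast
  have "S \<in> {S. k_sparse 1 V E S}" using S unfolding k_sparse_def by blast
  moreover have "finite (card ` {S. k_sparse 1 V E S})"
    using fin unfolding k_sparse_def by simp
  ultimately have "card S \<le> alpha_k 1 V E" unfolding alpha_k_def by (simp add: Max_ge)
  then show ?thesis using S(3) assms(2) unfolding ff_def by simp
qed

end
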